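(* Let $(X,d)$ be a finite metric space and $\alpha\ge 1$. If there is an $\alpha$-competitive randomized online algorithm for the continuous-time MTS model on $(X,d)$ (for piecewise continuous cost paths), then there is an $\alpha$-competitive randomized online algorithm for the discrete-time MTS model on $(X,d)$.
   Context: Discrete-time MTS: initial state $\rho_0\in X$; input a finite sequence of cost functions $c_t:X\to\mathbb R_+$; a randomized online algorithm chooses a random state $\rho_t$ whose law depends only on $c_1,\dots,c_t$, with cost $\sum_t[c_t(\rho_t)+d(\rho_{t-1},\rho_t)]$; $\mathsf{cost}^*$ is the infimum of this over deterministic state sequences from $\rho_0$. Continuous-time MTS: the input is a piecewise continuous path $(c(t))_{t\ge 0}$ of cost functions $c(t):X\to\mathbb R_+$ (supported on a bounded time interval). An online algorithm maps, for each $T\ge 0$, the path $(c(t))_{t\in[0,T]}$ to a random state $\rho(T)\in X$ (with $\rho$ piecewise constant, $\rho(0)=\rho_0$), paying service cost $\mathbb E\int_0^\infty c(t)(\rho(t))\,dt$ plus movement cost $\mathbb E\sum_{t:\rho(t^-)\ne\rho(t)}d(\rho(t^-),\rho(t))$. The offline optimum is the infimum of the same total cost over deterministic such paths starting from $\rho_0$. In both models, $\alpha$-competitive means: for every $\rho_0$ there is $\beta$ with expected online cost $\le\alpha\cdot$(offline optimum)$+\beta$ for every input. *)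

theory Defs
  imports "HOL-Probability.Probability"
begin

definition metric_on :: "('x \<Rightarrow> 'x \<Rightarrow> real) \<Rightarrow> bool" where
  "metric_on d \<longleftrightarrow>
     (\<forall>x y. d x y = 0 \<longleftrightarrow> x = y) \<and>
     (\<forall>x y. d x y = d y x) \<and>
     (\<forall>x y z. d x z \<le> d x y + d y z)"

text \<open>A randomized online algorithm for a given initial state is described by the law
  of its trajectory (rho_1, ..., rho_T) for every input sequence (c_1, ..., c_T);
  online-ness: the law of (rho_1, ..., rho_t) depends only on (c_1, ..., c_t).\<close>

definition nonneg_costs :: "('x \<Rightarrow> real) list \<Rightarrow> bool" where
  "nonneg_costs cs \<longleftrightarrow> (\<forall>c\<in>set cs. \<forall>x. 0 \<le> c x)"

definition disc_online_alg :: "(('x \<Rightarrow> real) list \<Rightarrow> 'x list pmf) \<Rightarrow> bool" where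
  "disc_online_alg P \<longleftrightarrow>
     (\<forall>cs. nonneg_costs cs \<longrightarrow>
        (\<forall>xs\<in>set_pmf (P cs). length xs = length cs) \<and>
        (\<forall>t. map_pmf (take t) (P cs) = P (take t cs)))"

definition disc_cost ::
  "('x \<Rightarrow> 'x \<Rightarrow> real) \<Rightarrow> 'x \<Rightarrow> ('x \<Rightarrow> real) list \<Rightarrow> 'x list \<Rightarrow> real" where
  "disc_cost d rho0 cs xs =
     (\<Sum>i<length cs. (cs ! i) (xs ! i) + d ((rho0 # xs) ! i) (xs ! i))"

definition disc_opt :: "('x \<Rightarrow> 'x \<Rightarrow> real) \<Rightarrow> 'x \<Rightarrow> ('x \<Rightarrow> real) list \<Rightarrow> real" where
  "disc_opt d rho0 cs = (INF xs\<in>{xs. length xs = length cs}. disc_cost d rho0 cs xs)"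

definition disc_competitive :: "('x \<Rightarrow> 'x \<Rightarrow> real) \<Rightarrow> real \<Rightarrow> bool" where
  "disc_competitive d \<alpha> \<longleftrightarrow>
     (\<forall>rho0. \<exists>P \<beta>. disc_online_alg P \<and>
        (\<forall>cs. nonneg_costs cs \<longrightarrow>
           measure_pmf.expectation (P cs) (disc_cost d rho0 cs) \<le> \<alpha> * disc_opt d rho0 cs + \<beta>))"

definition cost_path :: "(real \<Rightarrow> 'x \<Rightarrow> real) \<Rightarrow> bool" where
  "cost_path c \<longleftrightarrow>
     (\<forall>t x. 0 \<le> c t x) \<and>
     (\<exists>B. \<forall>t x. (t < 0 \<or> B < t) \<longrightarrow> c t x = 0) \<and>
     (\<exists>S. finite S \<and> (\<forall>x. \<forall>t. t \<notin> S \<longrightarrow> isCont (\<lambda>s. c s x) t)) \<and>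
     (\<forall>x t. (\<exists>l. ((\<lambda>s. c s x) \<longlongrightarrow> l) (at_left t)) \<and>
            (\<exists>l. ((\<lambda>s. c s x) \<longlongrightarrow> l) (at_right t)))"

text \<open>Piecewise constant state paths on [0,infinity): right-continuous with left limits
  (for a discrete state space this means a step function with finitely many jumps
  on every bounded interval).\<close>

definition step_path :: "(real \<Rightarrow> 'x) \<Rightarrow> bool" where
  "step_path \<rho> \<longleftrightarrow>
     (\<forall>t\<ge>0. \<forall>\<^sub>F s in at_right t. \<rho> s = \<rho> t) \<and>
     (\<forall>t>0. \<exists>x. \<forall>\<^sub>F s in at_left t. \<rho> s = x)"

definition left_val :: "(real \<Rightarrow> 'x) \<Rightarrow> real \<Rightarrow> 'x" where
  "left_val \<rho> t = (THE x. \<forall>\<^sub>F s in at_left t. \<rho> s = x)"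

definition jumps :: "(real \<Rightarrow> 'x) \<Rightarrow> real set" where
  "jumps \<rho> = {t. 0 < t \<and> left_val \<rho> t \<noteq> \<rho> t}"

definition service_cost :: "(real \<Rightarrow> 'x \<Rightarrow> real) \<Rightarrow> (real \<Rightarrow> 'x) \<Rightarrow> ennreal" where
  "service_cost c \<rho> = (\<integral>\<^sup>+ t\<in>{0..}. ennreal (c t (\<rho> t)) \<partial>lborel)"

definition movement_cost :: "('x \<Rightarrow> 'x \<Rightarrow> real) \<Rightarrow> (real \<Rightarrow> 'x) \<Rightarrow> ennreal" where
  "movement_cost d \<rho> = (\<integral>\<^sup>+ t. ennreal (d (left_val \<rho> t) (\<rho> t)) \<partial>count_space (jumps \<rho>))"

definition cont_cost ::
  "('x \<Rightarrow> 'x \<Rightarrow> real) \<Rightarrow> (real \<Rightarrow> 'x \<Rightarrow> real) \<Rightarrow> (real \<Rightarrow> 'x) \<Rightarrow> ennreal" where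
  "cont_cost d c \<rho> = service_cost c \<rho> + movement_cost d \<rho>"

definition cont_opt :: "('x \<Rightarrow> 'x \<Rightarrow> real) \<Rightarrow> 'x \<Rightarrow> (real \<Rightarrow> 'x \<Rightarrow> real) \<Rightarrow> ennreal" where
  "cont_opt d rho0 c = (INF \<rho>\<in>{\<rho>. step_path \<rho> \<and> \<rho> 0 = rho0}. cont_cost d c \<rho>)"

text \<open>A randomized continuous-time online algorithm with initial state rho0: a probability
  space M of random seeds and a map A: for seed w, input path c and time T, the state
  A w c T, which depends only on the restriction of c to [0,T].\<close>

definition cont_online_alg ::
  "('x \<Rightarrow> 'x \<Rightarrow> real) \<Rightarrow> 'x \<Rightarrow> 'w measure \<Rightarrow> ('w \<Rightarrow> (real \<Rightarrow> 'x \<Rightarrow> real) \<Rightarrow> real \<Rightarrow> 'x) \<Rightarrow> bool" where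
  "cont_online_alg d rho0 M A \<longleftrightarrow>
     prob_space M \<and>
     (\<forall>c. cost_path c \<longrightarrow>
        (\<forall>w\<in>space M. A w c 0 = rho0 \<and> step_path (A w c)) \<and>
        (\<forall>T. (\<lambda>w. A w c T) \<in> measurable M (count_space UNIV)) \<and>
        (\<lambda>w. cont_cost d c (A w c)) \<in> borel_measurable M) \<and>
     (\<forall>c c' T. cost_path c \<and> cost_path c' \<and> (\<forall>t\<in>{0..T}. c t = c' t) \<longrightarrow>
        (\<forall>w\<in>space M. A w c T = A w c' T))"

definition cont_competitive ::
  "'w itself \<Rightarrow> ('x \<Rightarrow> 'x \<Rightarrow> real) \<Rightarrow> real \<Rightarrow> bool" where
  "cont_competitive _ d \<alpha> \<longleftrightarrow>
     (\<forall>rho0. \<exists>(M :: 'w measure) A \<beta>. cont_online_alg d rho0 M A \<and>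
        (\<forall>c. cost_path c \<longrightarrow>
           (\<integral>\<^sup>+ w. cont_cost d c (A w c) \<partial>M) \<le> ennreal \<alpha> * cont_opt d rho0 c + ennreal \<beta>))"

end

theory Submission
  imports Defs
begin

lemma floor_ev_right: "\<forall>\<^sub>F s in at_right (t::real). h \<lfloor>s\<rfloor> = h \<lfloor>t\<rfloor>"
proof (rule eventually_at_rightI[of t "of_int \<lfloor>t\<rfloor> + 1"])
  fix s assume "s \<in> {t<..<of_int \<lfloor>t\<rfloor> + 1}"
  then have "\<lfloor>s\<rfloor> = \<lfloor>t\<rfloor>" by (auto simp: floor_eq_iff) (smt (verit) of_int_floor_le)
  then show "h \<lfloor>s\<rfloor> = h \<lfloor>t\<rfloor>" by simp
qed linarith

lemma floor_ev_left: "\<forall>\<^sub>F s in at_left (t::real). h \<lfloor>s\<rfloor> = h (\<lceil>t\<rceil> - 1)"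
proof (rule eventually_at_leftI[of "of_int \<lceil>t\<rceil> - 1" t])
  fix s assume "s \<in> {of_int \<lceil>t\<rceil> - 1<..<t}"
  then have "\<lfloor>s\<rfloor> = \<lceil>t\<rceil> - 1" by (auto simp: floor_eq_iff) (smt (verit) le_of_int_ceiling)
  then show "h \<lfloor>s\<rfloor> = h (\<lceil>t\<rceil> - 1)" by simp
qed linarith

lemma floor_ev_at: assumes "t \<notin> \<int>" shows "\<forall>\<^sub>F s in at (t::real). h \<lfloor>s\<rfloor> = h \<lfloor>t\<rfloor>"
proof -
  have "of_int \<lfloor>t\<rfloor> \<noteq> t" using assms by (metis Ints_of_int)
  then have a: "of_int \<lfloor>t\<rfloor> < t" by (simp add: less_le)
  have "\<lceil>t\<rceil> \<le> \<lfloor>t\<rfloor> + 1" by (simp add: ceiling_le_iff)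
  moreover have "real_of_int \<lfloor>t\<rfloor> < real_of_int \<lceil>t\<rceil>" using a le_of_int_ceiling[of t] by linarith
  then have "\<lfloor>t\<rfloor> < \<lceil>t\<rceil>" by linarith
  ultimately have "\<lceil>t\<rceil> - 1 = \<lfloor>t\<rfloor>" by linarith
  then show ?thesis unfolding eventually_at_split using floor_ev_left[of h t] floor_ev_right[of h t] by simp
qed

definition gc :: "('x \<Rightarrow> real) list \<Rightarrow> int \<Rightarrow> 'x \<Rightarrow> real" where
  "gc cs k = (if 1 \<le> k \<and> k \<le> int (length cs) then cs ! (nat k - 1) else (\<lambda>_. 0))"

definition ccost :: "('x \<Rightarrow> real) list \<Rightarrow> real \<Rightarrow> 'x \<Rightarrow> real" where
  "ccost cs s = gc cs \<lfloor>s\<rfloor>"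

lemma gc_nonneg: assumes "nonneg_costs cs" shows "0 \<le> gc cs k x"
proof (cases "1 \<le> k \<and> k \<le> int (length cs)")
  case True
  then have "nat k - 1 < length cs" by linarith
  then have "cs ! (nat k - 1) \<in> set cs" by (rule nth_mem)
  then show ?thesis using True assms by (auto simp: gc_def nonneg_costs_def)
qed (auto simp: gc_def)

lemma tendsto_ev_const: "\<forall>\<^sub>F s in F. f s = l \<Longrightarrow> (f \<longlongrightarrow> l) F"
  by (rule tendsto_eventually)

lemma cost_path_ccost:
  assumes "nonneg_costs cs"
  shows "cost_path (ccost cs)"
  unfolding cost_path_def
proof (intro conjI)
  show "\<forall>t x. 0 \<le> ccost cs t x"
    using assms by (auto simp: ccost_def gc_nonneg)
  show "\<exists>B. \<forall>t x. (t < 0 \<or> B < t) \<longrightarrow> ccost cs t x = 0"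
  proof (intro exI[of _ "real (length cs) + 1"] allI impI)
    fix t :: real and x assume "t < 0 \<or> real (length cs) + 1 < t"
    then have "\<lfloor>t\<rfloor> < 1 \<or> \<lfloor>t\<rfloor> > int (length cs)"
      by (auto simp: floor_less_iff less_floor_iff)
    then show "ccost cs t x = 0" by (auto simp: ccost_def gc_def)
  qed
  show "\<exists>S. finite S \<and> (\<forall>x t. t \<notin> S \<longrightarrow> isCont (\<lambda>s. ccost cs s x) t)"
  proof (intro exI[of _ "of_int ` {0..int (length cs) + 1}"] conjI allI impI)
    fix x and t :: real assume t: "t \<notin> of_int ` {0..int (length cs) + 1}"
    have "\<forall>\<^sub>F s in at t. ccost cs s x = ccost cs t x"
    proof (cases "t \<in> \<int>")
      case False
      then show ?thesis unfolding ccost_def using floor_ev_at[of t "\<lambda>k. gc cs k x"] by simp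
    next
      case True
      then obtain k where k: "t = of_int k" by (auto elim: Ints_cases)
      with t have "k < 0 \<or> k > int (length cs) + 1" by auto
      then have e: "gc cs (k - 1) x = gc cs k x" by (auto simp: gc_def)
      have "\<lceil>t\<rceil> = k" "\<lfloor>t\<rfloor> = k" using k by auto
      then show ?thesis unfolding ccost_def eventually_at_split
        using floor_ev_left[of "\<lambda>k. gc cs k x" t] floor_ev_right[of "\<lambda>k. gc cs k x" t] e by simp
    qed
    then show "isCont (\<lambda>s. ccost cs s x) t" unfolding isCont_def by (rule tendsto_ev_const)
  qed simp
  show "\<forall>x t. (\<exists>l. ((\<lambda>s. ccost cs s x) \<longlongrightarrow> l) (at_left t)) \<and> (\<exists>l. ((\<lambda>s. ccost cs s x) \<longlongrightarrow> l) (at_right t))"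
    unfolding ccost_def
  proof (intro allI conjI)
    fix x and t :: real
    show "\<exists>l. ((\<lambda>s. gc cs \<lfloor>s\<rfloor> x) \<longlongrightarrow> l) (at_left t)"
      by (rule exI, rule tendsto_ev_const, rule floor_ev_left[where h="\<lambda>k. gc cs k x"])
    show "\<exists>l. ((\<lambda>s. gc cs \<lfloor>s\<rfloor> x) \<longlongrightarrow> l) (at_right t)"
      by (rule exI, rule tendsto_ev_const, rule floor_ev_right[where h="\<lambda>k. gc cs k x"])
  qed
qed

lemma ccost_take_eq:
  assumes "0 \<le> s" "s < real t + 1"
  shows "ccost (take t cs) s = ccost cs s"
proof -
  have "\<lfloor>s\<rfloor> \<le> int t" using assms by (simp add: floor_le_iff) 
  then have "1 \<le> \<lfloor>s\<rfloor> \<Longrightarrow> nat \<lfloor>s\<rfloor> - 1 < t" by linarith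
  then show ?thesis unfolding ccost_def gc_def using \<open>\<lfloor>s\<rfloor> \<le> int t\<close> by (auto simp: min_def)
qed

lemma left_val_eq:
  assumes "\<forall>\<^sub>F s in at_left t. \<rho> s = x"
  shows "left_val \<rho> t = (x::'a)"
  unfolding left_val_def
proof (rule the_equality)
  show "\<forall>\<^sub>F s in at_left t. \<rho> s = x" by (rule assms)
  fix y assume "\<forall>\<^sub>F s in at_left t. \<rho> s = y"
  with assms have ev: "\<forall>\<^sub>F s in at_left t. \<rho> s = x \<and> \<rho> s = y" by (rule eventually_conj)
  have "at_left t \<noteq> bot" by simp
  with eventually_happens[OF ev] show "y = x" by auto
qed

definition rpath :: "'x \<Rightarrow> 'x list \<Rightarrow> real \<Rightarrow> 'x" where
  "rpath rho0 xs s = (rho0 # xs) ! min (length xs) (nat \<lfloor>s\<rfloor>)"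

lemma step_path_rpath: "step_path (rpath rho0 xs)"
  unfolding step_path_def rpath_def
proof (intro conjI allI impI)
  fix t :: real
  show "\<forall>\<^sub>F s in at_right t. (rho0 # xs) ! min (length xs) (nat \<lfloor>s\<rfloor>) = (rho0 # xs) ! min (length xs) (nat \<lfloor>t\<rfloor>)"
    by (rule floor_ev_right)
  show "\<exists>x. \<forall>\<^sub>F s in at_left t. (rho0 # xs) ! min (length xs) (nat \<lfloor>s\<rfloor>) = x"
    by (rule exI, rule floor_ev_left)
qed

lemma rpath_0: "rpath rho0 xs 0 = rho0"
  by (simp add: rpath_def)

lemma ceil_floor_nonint: assumes "(t::real) \<notin> \<int>" shows "\<lceil>t\<rceil> - 1 = \<lfloor>t\<rfloor>"
proof -
  have "of_int \<lfloor>t\<rfloor> \<noteq> t" using assms by (metis Ints_of_int)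
  then have a: "of_int \<lfloor>t\<rfloor> < t" by (simp add: less_le)
  have "\<lceil>t\<rceil> \<le> \<lfloor>t\<rfloor> + 1" by (simp add: ceiling_le_iff)
  moreover have "real_of_int \<lfloor>t\<rfloor> < real_of_int \<lceil>t\<rceil>" using a le_of_int_ceiling[of t] by linarith
  then have "\<lfloor>t\<rfloor> < \<lceil>t\<rceil>" by linarith
  ultimately show ?thesis by linarith
qed

lemma metric_nonneg: assumes "metric_on d" shows "0 \<le> d x y"
proof -
  have "d x x \<le> d x y + d y x" "d x x = 0" "d y x = d x y" using assms unfolding metric_on_def by blast+
  then show ?thesis by linarith
qed

lemma rpath_service:
  assumes "nonneg_costs cs" "length xs = length cs"
  shows "service_cost (ccost cs) (rpath rho0 xs) \<le> ennreal (\<Sum>i<length cs. (cs!i) (xs!i))"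
proof -
  let ?n = "length cs"
  have "service_cost (ccost cs) (rpath rho0 xs)
     \<le> (\<integral>\<^sup>+ t. (\<Sum>i<?n. ennreal ((cs!i) (xs!i)) * indicator {real i + 1..<real i + 2} t) \<partial>lborel)"
    unfolding service_cost_def
  proof (rule nn_integral_mono)
    fix t :: real
    show "ennreal (ccost cs t (rpath rho0 xs t)) * indicator {0..} t
      \<le> (\<Sum>i<?n. ennreal ((cs!i) (xs!i)) * indicator {real i + 1..<real i + 2} t)"
    proof (cases "1 \<le> \<lfloor>t\<rfloor> \<and> \<lfloor>t\<rfloor> \<le> int ?n")
      case True
      define i where "i = nat (\<lfloor>t\<rfloor> - 1)"
      have ii: "int i = \<lfloor>t\<rfloor> - 1" using True by (simp add: i_def)
      have i: "i < ?n" "\<lfloor>t\<rfloor> = int i + 1" using True ii by linarith+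
      have ni: "nat \<lfloor>t\<rfloor> = Suc i" using True by (simp add: i_def Suc_nat_eq_nat_zadd1)
      have ti: "t \<in> {real i + 1..<real i + 2}" using i(2) by (auto simp: floor_eq_iff)
      have "ccost cs t = cs ! i" using True ni by (simp add: ccost_def gc_def)
      moreover have "rpath rho0 xs t = xs ! i" using i assms(2) ni by (simp add: rpath_def)
      ultimately have "ennreal (ccost cs t (rpath rho0 xs t)) * indicator {0..} t
          \<le> ennreal ((cs!i) (xs!i)) * indicator {real i + 1..<real i + 2} t"
        using ti by (simp add: indicator_def)
      also have "\<dots> \<le> (\<Sum>i<?n. ennreal ((cs!i) (xs!i)) * indicator {real i + 1..<real i + 2} t)"
        by (rule member_le_sum) (use i in auto)
      finally show ?thesis .
    next
      case False
      have "ccost cs t = (\<lambda>_. 0)" unfolding ccost_def gc_def using False by (rule if_not_P)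
      then show ?thesis by simp
    qed
  qed
  also have "\<dots> = (\<Sum>i<?n. ennreal ((cs!i) (xs!i)) * emeasure lborel {real i + 1..<real i + 2})"
    by (subst nn_integral_sum) (auto simp: nn_integral_cmult_indicator)
  also have "\<dots> = (\<Sum>i<?n. ennreal ((cs!i) (xs!i)))" by simp
  also have "\<dots> = ennreal (\<Sum>i<?n. (cs!i) (xs!i))"
    using assms(1) nth_mem[of _ cs] by (intro sum_ennreal) (auto simp: nonneg_costs_def)
  finally show ?thesis .
qed

lemma rpath_jump:
  assumes "t \<in> jumps (rpath rho0 xs)"
  shows "\<exists>i<length xs. t = real i + 1 \<and> left_val (rpath rho0 xs) t = (rho0 # xs) ! i
           \<and> rpath rho0 xs t = xs ! i"
proof -
  let ?n = "length xs"
  let ?h = "\<lambda>k. (rho0 # xs) ! min ?n (nat k)"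
  have lv: "left_val (rpath rho0 xs) t = ?h (\<lceil>t\<rceil> - 1)"
    unfolding rpath_def by (rule left_val_eq, rule floor_ev_left)
  have t0: "0 < t" and ne: "left_val (rpath rho0 xs) t \<noteq> rpath rho0 xs t"
    using assms by (auto simp: jumps_def)
  have "t \<in> \<int>"
  proof (rule ccontr)
    assume "t \<notin> \<int>"
    then have "\<lceil>t\<rceil> - 1 = \<lfloor>t\<rfloor>" by (rule ceil_floor_nonint)
    with lv ne show False by (simp add: rpath_def)
  qed
  then obtain k where k: "t = of_int k" by (auto elim: Ints_cases)
  have k1: "k \<ge> 1" using t0 k by simp
  have "\<lceil>t\<rceil> = k" "\<lfloor>t\<rfloor> = k" using k by auto
  then have ne2: "?h (k - 1) \<noteq> ?h k" using lv ne by (simp add: rpath_def)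
  have kn: "k \<le> int ?n"
  proof (rule ccontr)
    assume "\<not> k \<le> int ?n"
    then have "min ?n (nat (k-1)) = ?n" "min ?n (nat k) = ?n" by auto
    with ne2 show False by simp
  qed
  define i where "i = nat (k - 1)"
  have ii: "int i = k - 1" using k1 by (simp add: i_def)
  have i: "i < ?n" "k = int i + 1" using k1 kn ii by linarith+
  have ni: "nat k = Suc i" using k1 by (simp add: i_def Suc_nat_eq_nat_zadd1)
  show ?thesis
  proof (intro exI conjI)
    show "i < ?n" by fact
    show "t = real i + 1" using k i(2) by simp
    show "left_val (rpath rho0 xs) t = (rho0 # xs) ! i"
      using lv \<open>\<lceil>t\<rceil> = k\<close> i(1) by (simp add: i_def[symmetric])
    show "rpath rho0 xs t = xs ! i"
      using \<open>\<lfloor>t\<rfloor> = k\<close> i(1) ni by (simp add: rpath_def)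
  qed
qed

lemma rpath_movement:
  assumes "metric_on d"
  shows "movement_cost d (rpath rho0 xs) \<le> ennreal (\<Sum>i<length xs. d ((rho0 # xs) ! i) (xs ! i))"
proof -
  let ?n = "length xs"
  let ?J = "jumps (rpath rho0 xs)"
  let ?D = "\<lambda>i. d ((rho0 # xs) ! i) (xs ! i)"
  have "movement_cost d (rpath rho0 xs)
      = (\<integral>\<^sup>+ t. ennreal (d (left_val (rpath rho0 xs) t) (rpath rho0 xs t)) * indicator ?J t \<partial>count_space UNIV)"
    unfolding movement_cost_def by (rule nn_integral_count_space_indicator) simp
  also have "\<dots> \<le> (\<integral>\<^sup>+ t. (\<Sum>i<?n. ennreal (?D i) * indicator {real i + 1} t) \<partial>count_space UNIV)"
  proof (rule nn_integral_mono)
    fix t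
    show "ennreal (d (left_val (rpath rho0 xs) t) (rpath rho0 xs t)) * indicator ?J t
        \<le> (\<Sum>i<?n. ennreal (?D i) * indicator {real i + 1} t)"
    proof (cases "t \<in> ?J")
      case True
      from rpath_jump[OF True] obtain i where i: "i < ?n" "t = real i + 1"
        "left_val (rpath rho0 xs) t = (rho0 # xs) ! i" "rpath rho0 xs t = xs ! i" by blast
      have "ennreal (d (left_val (rpath rho0 xs) t) (rpath rho0 xs t)) * indicator ?J t
          = ennreal (?D i) * indicator {real i + 1} t" using i True by simp
      also have "\<dots> \<le> (\<Sum>i<?n. ennreal (?D i) * indicator {real i + 1} t)"
        by (rule member_le_sum) (use i in auto)
      finally show ?thesis .
    qed simp
  qed
  also have "\<dots> = (\<Sum>i<?n. ennreal (?D i))"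
    by (subst nn_integral_sum) auto
  also have "\<dots> = ennreal (\<Sum>i<?n. ?D i)"
    using metric_nonneg[OF assms] by (intro sum_ennreal) auto
  finally show ?thesis .
qed

lemma disc_cost_split:
  assumes "metric_on d" "nonneg_costs cs" "length xs = length cs"
  shows "ennreal (disc_cost d rho0 cs xs)
     = ennreal (\<Sum>i<length cs. (cs!i) (xs!i)) + ennreal (\<Sum>i<length xs. d ((rho0 # xs) ! i) (xs ! i))"
proof -
  have a: "0 \<le> (\<Sum>i<length cs. (cs!i) (xs!i))"
    using assms(2) nth_mem[of _ cs] by (intro sum_nonneg) (auto simp: nonneg_costs_def)
  have b: "0 \<le> (\<Sum>i<length xs. d ((rho0 # xs) ! i) (xs ! i))"
    using metric_nonneg[OF assms(1)] by (intro sum_nonneg) auto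
  show ?thesis unfolding disc_cost_def using a b assms(3)
    by (simp add: sum.distrib ennreal_plus)
qed

lemma rpath_cost:
  assumes "metric_on d" "nonneg_costs cs" "length xs = length cs"
  shows "cont_cost d (ccost cs) (rpath rho0 xs) \<le> ennreal (disc_cost d rho0 cs xs)"
  unfolding cont_cost_def disc_cost_split[OF assms]
  using rpath_service[OF assms(2,3), of rho0] rpath_movement[OF assms(1), of rho0 xs]
  by (rule add_mono)

lemma cont_opt_le:
  assumes "metric_on d" "nonneg_costs cs"
  shows "cont_opt d rho0 (ccost cs) \<le> ennreal (disc_opt d rho0 (cs :: ('x::finite \<Rightarrow> real) list))"
proof -
  let ?S = "{xs :: 'x list. length xs = length cs}"
  have fin: "finite ?S" using finite_lists_length_eq[of "UNIV :: 'x set" "length cs"] by simp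
  have ne: "?S \<noteq> {}" by (auto intro: exI[of _ "replicate (length cs) undefined"])
  obtain xs0 where xs0: "xs0 \<in> ?S" "\<And>xs. xs \<in> ?S \<Longrightarrow> disc_cost d rho0 cs xs0 \<le> disc_cost d rho0 cs xs"
  proof -
    have "Min (disc_cost d rho0 cs ` ?S) \<in> disc_cost d rho0 cs ` ?S" using fin ne by (intro Min_in) auto
    then obtain xs0 where "xs0 \<in> ?S" "disc_cost d rho0 cs xs0 = Min (disc_cost d rho0 cs ` ?S)" by auto
    moreover have "\<And>xs. xs \<in> ?S \<Longrightarrow> Min (disc_cost d rho0 cs ` ?S) \<le> disc_cost d rho0 cs xs"
      using fin by (intro Min_le) auto
    ultimately show ?thesis using that by metis
  qed
  have "disc_opt d rho0 cs = disc_cost d rho0 cs xs0"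
    unfolding disc_opt_def
  proof (rule antisym)
    show "(INF xs\<in>?S. disc_cost d rho0 cs xs) \<le> disc_cost d rho0 cs xs0"
      by (rule cINF_lower[OF _ xs0(1)]) (use fin in \<open>auto intro: bdd_below_finite\<close>)
    show "disc_cost d rho0 cs xs0 \<le> (INF xs\<in>?S. disc_cost d rho0 cs xs)"
      by (rule cINF_greatest[OF ne xs0(2)])
  qed
  moreover have "cont_opt d rho0 (ccost cs) \<le> cont_cost d (ccost cs) (rpath rho0 xs0)"
    unfolding cont_opt_def by (rule INF_lower) (simp add: step_path_rpath rpath_0)
  ultimately show ?thesis using rpath_cost[OF assms, of xs0 rho0] xs0(1) by simp
qed

lemma real_induct:
  fixes a b :: real
  assumes ab: "a \<le> b" and Pa: "P a"
    and R: "\<And>s. a \<le> s \<Longrightarrow> s < b \<Longrightarrow> P s \<Longrightarrow> \<exists>e>0. \<forall>u. s < u \<and> u < s + e \<longrightarrow> P u"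
    and L: "\<And>s. a < s \<Longrightarrow> s \<le> b \<Longrightarrow> (\<forall>u. a \<le> u \<and> u < s \<longrightarrow> P u) \<Longrightarrow> P s"
  shows "P b"
proof -
  define S where "S = {s. a \<le> s \<and> s \<le> b \<and> (\<forall>u. a \<le> u \<and> u \<le> s \<longrightarrow> P u)}"
  define m where "m = Sup S"
  have aS: "a \<in> S" using ab Pa by (auto simp: S_def)
  have bdd: "bdd_above S" by (auto simp: S_def bdd_above_def)
  have am: "a \<le> m" unfolding m_def by (rule cSup_upper[OF aS bdd])
  have mb: "m \<le> b" unfolding m_def by (rule cSup_least) (use aS in \<open>auto simp: S_def\<close>)
  have below: "\<forall>u. a \<le> u \<and> u < m \<longrightarrow> P u"
  proof (intro allI impI)
    fix u assume u: "a \<le> u \<and> u < m"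
    then obtain s where "s \<in> S" "u < s" using less_cSup_iff[of S u] aS bdd by (auto simp: m_def)
    then show "P u" using u by (auto simp: S_def)
  qed
  have Pm: "P m"
  proof (cases "m = a")
    case True then show ?thesis using Pa by simp
  next
    case False then show ?thesis using L[of m] am mb below by simp
  qed
  have mS: "m \<in> S" using am mb below Pm by (auto simp: S_def less_le)
  show "P b"
  proof (cases "m < b")
    case True
    obtain e where e: "e > 0" "\<forall>u. m < u \<and> u < m + e \<longrightarrow> P u" using R[OF am True Pm] by blast
    define m' where "m' = min (m + e/2) b"
    have m'1: "m < m'" "m' \<le> b" "m' < m + e" using e True by (auto simp: m'_def)
    have "m' \<in> S" unfolding S_def
    proof (intro CollectI conjI allI impI)
      show "a \<le> m'" using am m'1 by simp
      show "m' \<le> b" by (fact m'1)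
      fix u assume u: "a \<le> u \<and> u \<le> m'"
      show "P u"
      proof (cases "u \<le> m")
        case True then show ?thesis using mS u by (auto simp: S_def)
      next
        case False then show ?thesis using e(2) u m'1 by auto
      qed
    qed
    then have "m' \<le> m" unfolding m_def by (rule cSup_upper[OF _ bdd])
    with e True show ?thesis by (simp add: m'_def)
  next
    case False
    then show ?thesis using mb Pm by simp
  qed
qed

definition moved :: "('x \<Rightarrow> 'x \<Rightarrow> real) \<Rightarrow> (real \<Rightarrow> 'x) \<Rightarrow> real \<Rightarrow> real \<Rightarrow> ennreal" where
  "moved d \<rho> a b = (\<integral>\<^sup>+ t. ennreal (d (left_val \<rho> t) (\<rho> t)) * indicator {a<..b} t \<partial>count_space (jumps \<rho>))"

lemma moved_add:
  assumes "a \<le> b" "b \<le> c"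
  shows "moved d \<rho> a c = moved d \<rho> a b + moved d \<rho> b c"
proof -
  have "\<And>t. ennreal (d (left_val \<rho> t) (\<rho> t)) * indicator {a<..c} t
     = ennreal (d (left_val \<rho> t) (\<rho> t)) * indicator {a<..b} t + ennreal (d (left_val \<rho> t) (\<rho> t)) * indicator {b<..c} t"
    using assms by (auto simp: indicator_def)
  then show ?thesis unfolding moved_def
    by (simp add: nn_integral_add)
qed

lemma moved_mono: "a \<le> b \<Longrightarrow> b \<le> c \<Longrightarrow> moved d \<rho> a b \<le> moved d \<rho> a c"
  using moved_add[of a b c d \<rho>] by simp

lemma moved_le_movement: "moved d \<rho> a b \<le> movement_cost d \<rho>"
  unfolding moved_def movement_cost_def
  by (rule nn_integral_mono) (simp add: indicator_def)

lemma moved_jump: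
  assumes "s \<in> jumps \<rho>" "u < s"
  shows "ennreal (d (left_val \<rho> s) (\<rho> s)) \<le> moved d \<rho> u s"
proof -
  have "(\<integral>\<^sup>+ t. ennreal (d (left_val \<rho> t) (\<rho> t)) * indicator {s} t \<partial>count_space (jumps \<rho>))
     \<le> moved d \<rho> u s"
    unfolding moved_def using assms(2) by (intro nn_integral_mono) (auto simp: indicator_def)
  moreover have "(\<integral>\<^sup>+ t. ennreal (d (left_val \<rho> t) (\<rho> t)) * indicator {s} t \<partial>count_space (jumps \<rho>))
     = ennreal (d (left_val \<rho> s) (\<rho> s))"
    using assms(1) by (subst nn_integral_indicator_singleton) auto
  ultimately show ?thesis by simp
qed

lemma dist_le_moved:
  assumes sp: "step_path \<rho>" and d: "metric_on d" and a0: "0 \<le> a" and ab: "a \<le> b"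
  shows "ennreal (d (\<rho> a) (\<rho> b)) \<le> moved d \<rho> a b"
proof (rule real_induct[OF ab, where P = "\<lambda>s. ennreal (d (\<rho> a) (\<rho> s)) \<le> moved d \<rho> a s"])
  have "d (\<rho> a) (\<rho> a) = 0" using d unfolding metric_on_def by blast
  then show "ennreal (d (\<rho> a) (\<rho> a)) \<le> moved d \<rho> a a" by simp
next
  fix s assume as: "a \<le> s" and sb: "s < b" and Ps: "ennreal (d (\<rho> a) (\<rho> s)) \<le> moved d \<rho> a s"
  have "\<forall>\<^sub>F u in at_right s. \<rho> u = \<rho> s" using sp as a0 by (auto simp: step_path_def)
  then obtain c where c: "c > s" "\<forall>u>s. u < c \<longrightarrow> \<rho> u = \<rho> s"
    using eventually_at_right[of s "s+1"] by auto
  show "\<exists>e>0. \<forall>u. s < u \<and> u < s + e \<longrightarrow> ennreal (d (\<rho> a) (\<rho> u)) \<le> moved d \<rho> a u"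
  proof (intro exI[of _ "c - s"] conjI allI impI)
    show "c - s > 0" using c by simp
    fix u assume "s < u \<and> u < s + (c - s)"
    then have "\<rho> u = \<rho> s" "s \<le> u" using c by auto
    then show "ennreal (d (\<rho> a) (\<rho> u)) \<le> moved d \<rho> a u"
      using Ps moved_mono[OF as, of u d \<rho>] by simp
  qed
next
  fix s assume as: "a < s" and sb: "s \<le> b"
    and IH: "\<forall>u. a \<le> u \<and> u < s \<longrightarrow> ennreal (d (\<rho> a) (\<rho> u)) \<le> moved d \<rho> a u"
  have s0: "s > 0" using as a0 by simp
  then obtain x where x: "\<forall>\<^sub>F u in at_left s. \<rho> u = x" using sp by (auto simp: step_path_def)
  have lv: "left_val \<rho> s = x" by (rule left_val_eq[OF x])
  obtain c where c: "c < s" "\<forall>u>c. u < s \<longrightarrow> \<rho> u = x"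
    using x eventually_at_left[of "s - 1" s] by auto
  define u where "u = max ((c + s)/2) a"
  have u1: "(c + s)/2 \<le> u" "a \<le> u" by (simp_all add: u_def)
  have u2: "u < s" using c as by (simp add: u_def)
  have u: "a \<le> u" "u < s" "c < u" using u1 u2 c by auto
  have Pu: "ennreal (d (\<rho> a) x) \<le> moved d \<rho> a u" using IH u c by auto
  have jmp: "ennreal (d x (\<rho> s)) \<le> moved d \<rho> u s"
  proof (cases "s \<in> jumps \<rho>")
    case True then show ?thesis using moved_jump[OF True u(2), of d] lv by simp
  next
    case False
    then have "x = \<rho> s" using lv s0 by (auto simp: jumps_def)
    moreover have "d x x = 0" using d unfolding metric_on_def by blast
    ultimately show ?thesis by simp
  qed
  have nn: "0 \<le> d (\<rho> a) x" "0 \<le> d x (\<rho> s)" using metric_nonneg[OF d] by auto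
  have "d (\<rho> a) (\<rho> s) \<le> d (\<rho> a) x + d x (\<rho> s)" using d unfolding metric_on_def by blast
  then have "ennreal (d (\<rho> a) (\<rho> s)) \<le> ennreal (d (\<rho> a) x) + ennreal (d x (\<rho> s))"
    using nn by (simp add: ennreal_plus[symmetric] del: ennreal_plus)
  also have "\<dots> \<le> moved d \<rho> a u + moved d \<rho> u s" using Pu jmp by (rule add_mono)
  also have "\<dots> = moved d \<rho> a s" using moved_add[of a u s d \<rho>] u by simp
  finally show "ennreal (d (\<rho> a) (\<rho> s)) \<le> moved d \<rho> a s" .
qed

definition law :: "'w measure \<Rightarrow> ('w \<Rightarrow> 'b::countable) \<Rightarrow> 'b pmf" where
  "law M f = embed_pmf (\<lambda>y. measure M (f -` {y} \<inter> space M))"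

lemma law_measure:
  assumes M: "prob_space M" and f: "f \<in> measurable M (count_space UNIV)"
  shows "measure_pmf (law M f) = distr M (count_space UNIV) f"
proof -
  interpret prob_space M by (rule M)
  let ?N = "distr M (count_space UNIV) f"
  let ?g = "\<lambda>y. measure M (f -` {y} \<inter> space M)"
  have N: "prob_space ?N" by (rule prob_space_distr[OF f])
  have sing: "emeasure ?N {y} = ennreal (?g y)" for y
    using f by (simp add: emeasure_distr emeasure_eq_measure)
  have tot: "(\<integral>\<^sup>+ y. ennreal (?g y) \<partial>count_space UNIV) = 1"
  proof -
    have "(\<integral>\<^sup>+ y. ennreal (?g y) \<partial>count_space UNIV) = (\<integral>\<^sup>+ y. emeasure ?N {y} \<partial>count_space UNIV)"
      using sing by simp
    also have "\<dots> = emeasure ?N UNIV"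
      by (rule emeasure_countable_singleton[symmetric]) auto
    also have "\<dots> = 1" using prob_space.emeasure_space_1[OF N] by simp
    finally show ?thesis .
  qed
  have pm: "pmf (law M f) y = ?g y" for y
    unfolding law_def by (rule pmf_embed_pmf) (use tot in auto)
  show ?thesis
  proof (rule measure_eqI_countable[where A = UNIV])
    fix a
    show "emeasure (measure_pmf (law M f)) {a} = emeasure ?N {a}"
      by (simp add: emeasure_pmf_single pm sing)
  qed auto
qed

lemma law_map:
  assumes M: "prob_space M" and f: "f \<in> measurable M (count_space UNIV)"
  shows "map_pmf g (law M f) = law M (g \<circ> f)"
proof -
  have gf: "g \<circ> f \<in> measurable M (count_space UNIV)" using f by simp
  show ?thesis
    by (rule measure_pmf_inject[THEN iffD1])
       (simp add: map_pmf_rep_eq law_measure[OF M f] law_measure[OF M gf] distr_distr[OF _ f])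
qed

lemma law_cong:
  assumes "\<And>w. w \<in> space M \<Longrightarrow> f w = f' w"
  shows "law M f = law M f'"
proof -
  have "f -` {y} \<inter> space M = f' -` {y} \<inter> space M" for y using assms by auto
  then show ?thesis unfolding law_def by simp
qed

lemma law_set:
  assumes M: "prob_space M" and f: "f \<in> measurable M (count_space UNIV)"
  shows "set_pmf (law M f) \<subseteq> f ` space M"
proof
  fix y assume "y \<in> set_pmf (law M f)"
  then have "pmf (law M f) y \<noteq> 0" by (simp add: set_pmf_iff)
  then have "measure (measure_pmf (law M f)) {y} \<noteq> 0" by (simp add: measure_pmf_single)
  then have "measure (distr M (count_space UNIV) f) {y} \<noteq> 0" by (metis law_measure[OF M f])
  then have "f -` {y} \<inter> space M \<noteq> {}" using f by (auto simp: measure_distr)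
  then show "y \<in> f ` space M" by auto
qed

lemma law_nn_integral:
  assumes M: "prob_space M" and f: "f \<in> measurable M (count_space UNIV)"
  shows "(\<integral>\<^sup>+ y. h y \<partial>measure_pmf (law M f)) = (\<integral>\<^sup>+ w. h (f w) \<partial>M)"
  by (simp add: law_measure[OF M f] nn_integral_distr[OF f])

definition vis :: "('w \<Rightarrow> (real \<Rightarrow> 'x \<Rightarrow> real) \<Rightarrow> real \<Rightarrow> 'x) \<Rightarrow> ('x \<Rightarrow> real) list \<Rightarrow> nat \<Rightarrow> 'w \<Rightarrow> 'x set" where
  "vis A cs i w = {A w (ccost cs) (of_rat q) | q. real i + 1 \<le> of_rat q \<and> of_rat q < real i + 2}"

definition alg :: "('w \<Rightarrow> (real \<Rightarrow> 'x \<Rightarrow> real) \<Rightarrow> real \<Rightarrow> 'x) \<Rightarrow> ('x \<Rightarrow> real) list \<Rightarrow> 'w \<Rightarrow> 'x list" where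
  "alg A cs w = map (\<lambda>i. arg_min_on (cs ! i) (vis A cs i w)) [0..<length cs]"

lemma vis_ne: "vis A cs i w \<noteq> {}"
proof -
  obtain q :: rat where "real i + 1 < of_rat q" "of_rat q < real i + 2"
    using of_rat_dense[of "real i + 1" "real i + 2"] by auto
  then show ?thesis unfolding vis_def by fastforce
qed

lemma vis_fin: "finite (vis A cs i (w::'w) :: 'x::finite set)" by simp

lemma alg_len[simp]: "length (alg A cs w) = length cs" by (simp add: alg_def)

lemma alg_nth:
  fixes A :: "'w \<Rightarrow> (real \<Rightarrow> 'x::finite \<Rightarrow> real) \<Rightarrow> real \<Rightarrow> 'x"
  assumes "i < length cs"
  shows "alg A cs w ! i \<in> vis A cs i w" "\<And>y. y \<in> vis A cs i w \<Longrightarrow> (cs ! i) (alg A cs w ! i) \<le> (cs ! i) y"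
proof -
  have e: "alg A cs w ! i = arg_min_on (cs ! i) (vis A cs i w)" using assms by (simp add: alg_def)
  show "alg A cs w ! i \<in> vis A cs i w" unfolding e by (rule arg_min_if_finite(1)) (simp_all add: vis_ne)
  have nl: "\<not>(\<exists>x\<in>vis A cs i w. (cs!i) x < (cs!i) (arg_min_on (cs!i) (vis A cs i w)))"
    by (rule arg_min_if_finite(2)) (simp_all add: vis_ne)
  fix y assume "y \<in> vis A cs i w"
  then show "(cs ! i) (alg A cs w ! i) \<le> (cs ! i) y"
    using nl unfolding e by force
qed

lemma vis_cover:
  assumes sp: "step_path (A w (ccost cs))" and s: "real i + 1 \<le> s" "s < real i + 2"
  shows "A w (ccost cs) s \<in> vis A cs i w"
proof -
  let ?\<rho> = "A w (ccost cs)"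
  have "\<forall>\<^sub>F u in at_right s. ?\<rho> u = ?\<rho> s" using sp s by (auto simp: step_path_def)
  then obtain c where c: "c > s" "\<forall>u>s. u < c \<longrightarrow> ?\<rho> u = ?\<rho> s"
    using eventually_at_right[of s "s+1"] by auto
  obtain q :: rat where q: "s < of_rat q" "of_rat q < min c (real i + 2)"
    using of_rat_dense[of s "min c (real i + 2)"] c s by auto
  then have "?\<rho> (of_rat q) = ?\<rho> s" using c by auto
  moreover have "real i + 1 \<le> of_rat q" "of_rat q < real i + 2" using q s by auto
  ultimately show ?thesis unfolding vis_def by (metis (mono_tags, lifting) mem_Collect_eq)
qed

lemma moved_telescope:
  "(\<forall>i<n. \<tau> i \<le> \<tau> (Suc i)) \<Longrightarrow>
    (\<Sum>i<n. moved d \<rho> (\<tau> i) (\<tau> (Suc i))) = moved d \<rho> (\<tau> 0) (\<tau> n) \<and> \<tau> 0 \<le> \<tau> n"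
proof (induction n)
  case 0
  then show ?case by (simp add: moved_def)
next
  case (Suc n)
  then have IH: "(\<Sum>i<n. moved d \<rho> (\<tau> i) (\<tau> (Suc i))) = moved d \<rho> (\<tau> 0) (\<tau> n)" "\<tau> 0 \<le> \<tau> n"
    by auto
  have "\<tau> n \<le> \<tau> (Suc n)" using Suc.prems by auto
  then show ?case using IH moved_add[of "\<tau> 0" "\<tau> n" "\<tau> (Suc n)" d \<rho>] by simp
qed

lemma pathwise:
  fixes A :: "'w \<Rightarrow> (real \<Rightarrow> 'x::finite \<Rightarrow> real) \<Rightarrow> real \<Rightarrow> 'x"
  assumes d: "metric_on d" and nn: "nonneg_costs cs" and sp: "step_path (A w (ccost cs))"
    and r0: "A w (ccost cs) 0 = rho0"
  shows "ennreal (disc_cost d rho0 cs (alg A cs w)) \<le> cont_cost d (ccost cs) (A w (ccost cs))"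
proof -
  let ?\<rho> = "A w (ccost cs)"
  let ?xs = "alg A cs w"
  let ?n = "length cs"
  have len: "length ?xs = ?n" by simp
  have csnn: "0 \<le> (cs ! i) x" if "i < ?n" for i x
    using nn nth_mem[OF that] by (auto simp: nonneg_costs_def)
  have floorI: "\<lfloor>t\<rfloor> = int i + 1" if "t \<in> {real i + 1..<real i + 2}" for t i
    using that by (auto simp: floor_eq_iff)
  have serv: "ennreal (\<Sum>i<?n. (cs!i) (?xs!i)) \<le> service_cost (ccost cs) ?\<rho>"
  proof -
    have "ennreal (\<Sum>i<?n. (cs!i) (?xs!i)) = (\<Sum>i<?n. ennreal ((cs!i) (?xs!i)))"
      using csnn by (intro sum_ennreal[symmetric]) auto
    also have "\<dots> = (\<Sum>i<?n. ennreal ((cs!i) (?xs!i)) * emeasure lborel {real i + 1..<real i + 2})"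
      by simp
    also have "\<dots> = (\<integral>\<^sup>+ t. (\<Sum>i<?n. ennreal ((cs!i) (?xs!i)) * indicator {real i + 1..<real i + 2} t) \<partial>lborel)"
      by (subst nn_integral_sum) (auto simp: nn_integral_cmult_indicator)
    also have "\<dots> \<le> service_cost (ccost cs) ?\<rho>"
      unfolding service_cost_def
    proof (rule nn_integral_mono)
      fix t :: real
      show "(\<Sum>i<?n. ennreal ((cs!i) (?xs!i)) * indicator {real i + 1..<real i + 2} t)
          \<le> ennreal (ccost cs t (?\<rho> t)) * indicator {0..} t"
      proof (cases "\<exists>i<?n. t \<in> {real i + 1..<real i + 2}")
        case True
        then obtain i where i: "i < ?n" "t \<in> {real i + 1..<real i + 2}" by blast
        have ft: "\<lfloor>t\<rfloor> = int i + 1" by (rule floorI[OF i(2)])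
        have z: "ennreal ((cs!j) (?xs!j)) * indicator {real j + 1..<real j + 2} t = 0"
          if "j \<in> {..<?n} - {i}" for j
        proof -
          have "t \<notin> {real j + 1..<real j + 2}"
          proof
            assume "t \<in> {real j + 1..<real j + 2}"
            then have "\<lfloor>t\<rfloor> = int j + 1" by (rule floorI)
            with ft that show False by simp
          qed
          then show ?thesis by simp
        qed
        have "(\<Sum>j<?n. ennreal ((cs!j) (?xs!j)) * indicator {real j + 1..<real j + 2} t)
            = ennreal ((cs!i) (?xs!i)) * indicator {real i + 1..<real i + 2} t
              + (\<Sum>j\<in>{..<?n} - {i}. ennreal ((cs!j) (?xs!j)) * indicator {real j + 1..<real j + 2} t)"
          using i(1) by (subst sum.remove[of _ i]) auto
        also have "\<dots> = ennreal ((cs!i) (?xs!i))" using z i(2) by simp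
        also have "\<dots> \<le> ennreal ((cs!i) (?\<rho> t))"
        proof -
          have "?\<rho> t \<in> vis A cs i w" using vis_cover[where A=A and w=w and cs=cs, OF sp] i(2) by auto
          then have "(cs ! i) (?xs ! i) \<le> (cs ! i) (?\<rho> t)" by (rule alg_nth(2)[OF i(1)])
          then show ?thesis by (rule ennreal_leI)
        qed
        also have "\<dots> = ennreal (ccost cs t (?\<rho> t)) * indicator {0..} t"
        proof -
          have ni: "nat (int i + 1) = Suc i" by (simp add: nat_eq_iff)
          have "ccost cs t = cs ! i" using ft i(1) ni by (simp add: ccost_def gc_def)
          moreover have "0 \<le> t" using i(2) by simp
          ultimately show ?thesis by simp
        qed
        finally show ?thesis .
      next
        case False
        then have "(\<Sum>i<?n. ennreal ((cs!i) (?xs!i)) * indicator {real i + 1..<real i + 2} t) = 0"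
          by (intro sum.neutral) auto
        then show ?thesis by simp
      qed
    qed
    finally show ?thesis .
  qed
  define \<tau> :: "nat \<Rightarrow> real" where
    "\<tau> k = (case k of 0 \<Rightarrow> 0 | Suc i \<Rightarrow> (SOME s. real i + 1 \<le> s \<and> s < real i + 2 \<and> ?\<rho> s = ?xs ! i))" for k
  have tauS: "real i + 1 \<le> \<tau> (Suc i) \<and> \<tau> (Suc i) < real i + 2 \<and> ?\<rho> (\<tau> (Suc i)) = ?xs ! i"
    if "i < ?n" for i
  proof -
    have "?xs ! i \<in> vis A cs i w" by (rule alg_nth(1)[OF that])
    then have "\<exists>s. real i + 1 \<le> s \<and> s < real i + 2 \<and> ?\<rho> s = ?xs ! i" unfolding vis_def by auto
    then show ?thesis unfolding \<tau>_def by (simp, rule someI_ex)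
  qed
  have tau0: "\<tau> 0 = 0" by (simp add: \<tau>_def)
  have tau_nn: "0 \<le> \<tau> i" if "i \<le> ?n" for i
  proof (cases i)
    case 0 then show ?thesis by (simp add: tau0)
  next
    case (Suc j) then show ?thesis using tauS[of j] that by force
  qed
  have tau_mono: "\<tau> i \<le> \<tau> (Suc i)" if "i < ?n" for i
  proof (cases i)
    case 0 then show ?thesis using tauS[of 0] that tau0 by force
  next
    case (Suc j) then show ?thesis using tauS[of j] tauS[of i] that by force
  qed
  have tau_val: "?\<rho> (\<tau> i) = (rho0 # ?xs) ! i" "?\<rho> (\<tau> (Suc i)) = ?xs ! i" if "i < ?n" for i
  proof -
    show "?\<rho> (\<tau> (Suc i)) = ?xs ! i" using tauS[OF that] by simp
    show "?\<rho> (\<tau> i) = (rho0 # ?xs) ! i"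
    proof (cases i)
      case 0 then show ?thesis by (simp add: tau0 r0)
    next
      case (Suc j) then show ?thesis using tauS[of j] that by simp
    qed
  qed
  have mov: "ennreal (\<Sum>i<length ?xs. d ((rho0 # ?xs) ! i) (?xs ! i)) \<le> movement_cost d ?\<rho>"
  proof -
    have "ennreal (\<Sum>i<length ?xs. d ((rho0 # ?xs) ! i) (?xs ! i))
        = (\<Sum>i<?n. ennreal (d ((rho0 # ?xs) ! i) (?xs ! i)))"
      using metric_nonneg[OF d] by (simp add: sum_ennreal)
    also have "\<dots> \<le> (\<Sum>i<?n. moved d ?\<rho> (\<tau> i) (\<tau> (Suc i)))"
    proof (rule sum_mono)
      fix i assume "i \<in> {..<?n}"
      then have i: "i < ?n" by simp
      have "ennreal (d (?\<rho> (\<tau> i)) (?\<rho> (\<tau> (Suc i)))) \<le> moved d ?\<rho> (\<tau> i) (\<tau> (Suc i))"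
        by (rule dist_le_moved[OF sp d tau_nn tau_mono[OF i]]) (use i in simp)
      then show "ennreal (d ((rho0 # ?xs) ! i) (?xs ! i)) \<le> moved d ?\<rho> (\<tau> i) (\<tau> (Suc i))"
        using tau_val[OF i] by simp
    qed
    also have "\<dots> = moved d ?\<rho> (\<tau> 0) (\<tau> ?n)"
      using moved_telescope[of ?n \<tau> d ?\<rho>] tau_mono by auto
    also have "\<dots> \<le> movement_cost d ?\<rho>" by (rule moved_le_movement)
    finally show ?thesis .
  qed
  show ?thesis
    unfolding disc_cost_split[OF d nn len] cont_cost_def
    using serv mov by (rule add_mono)
qed

lemma eq_sets:
  assumes "f \<in> measurable M (count_space UNIV)"
  shows "{w\<in>space M. f w = x} \<in> sets M"
proof -
  have "f -` {x} \<inter> space M \<in> sets M" by (rule measurable_sets[OF assms]) simp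
  moreover have "{w\<in>space M. f w = x} = f -` {x} \<inter> space M" by auto
  ultimately show ?thesis by simp
qed

lemma vis_meas:
  fixes A :: "'w \<Rightarrow> (real \<Rightarrow> 'x::finite \<Rightarrow> real) \<Rightarrow> real \<Rightarrow> 'x"
  assumes m: "\<And>q. (\<lambda>w. A w (ccost cs) q) \<in> measurable M (count_space UNIV)"
  shows "(\<lambda>w. vis A cs i w) \<in> measurable M (count_space UNIV)"
proof (subst measurable_count_space_eq2_countable, intro conjI ballI)
  show "(\<lambda>w. vis A cs i w) \<in> space M \<rightarrow> UNIV" by simp
  fix V :: "'x set"
  have Sx: "{w\<in>space M. x \<in> vis A cs i w} \<in> sets M" for x
  proof -
    have "{w\<in>space M. x \<in> vis A cs i w} = {w\<in>space M. \<exists>q::rat. (real i + 1 \<le> of_rat q \<and> of_rat q < real i + 2) \<and> A w (ccost cs) (of_rat q) = x}"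
      unfolding vis_def by blast
    also have "\<dots> \<in> sets M"
    proof (rule sets.sets_Collect_countable_Ex)
      fix q :: rat
      show "{w\<in>space M. (real i + 1 \<le> of_rat q \<and> of_rat q < real i + 2) \<and> A w (ccost cs) (of_rat q) = x} \<in> sets M"
      proof (cases "real i + 1 \<le> of_rat q \<and> of_rat q < real i + 2")
        case True then show ?thesis using eq_sets[OF m] by simp
      next
        case False
        have "{w\<in>space M. (real i + 1 \<le> of_rat q \<and> of_rat q < real i + 2) \<and> A w (ccost cs) (of_rat q) = x} = {}"
          using False by blast
        then show ?thesis by (simp only: sets.empty_sets)
      qed
    qed
    finally show ?thesis .
  qed
  have "{w\<in>space M. \<forall>x::'x. (x \<in> vis A cs i w) = (x \<in> V)} \<in> sets M"
  proof (rule sets.sets_Collect_countable_All)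
    fix x :: 'x
    show "{w\<in>space M. (x \<in> vis A cs i w) = (x \<in> V)} \<in> sets M"
    proof (cases "x \<in> V")
      case True then show ?thesis using Sx by simp
    next
      case False then show ?thesis using sets.sets_Collect_neg[OF Sx] by simp
    qed
  qed
  moreover have "(\<lambda>w. vis A cs i w) -` {V} \<inter> space M = {w\<in>space M. \<forall>x::'x. (x \<in> vis A cs i w) = (x \<in> V)}"
  proof -
    have "\<And>w. (vis A cs i w = V) = (\<forall>x::'x. (x \<in> vis A cs i w) = (x \<in> V))" by (rule set_eq_iff)
    then show ?thesis by blast
  qed
  ultimately show "(\<lambda>w. vis A cs i w) -` {V} \<inter> space M \<in> sets M" by simp
qed

lemma alg_meas:
  fixes A :: "'w \<Rightarrow> (real \<Rightarrow> 'x::finite \<Rightarrow> real) \<Rightarrow> real \<Rightarrow> 'x"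
  assumes m: "\<And>q. (\<lambda>w. A w (ccost cs) q) \<in> measurable M (count_space UNIV)"
  shows "alg A cs \<in> measurable M (count_space UNIV)"
proof (subst measurable_count_space_eq2_countable, intro conjI ballI)
  show "alg A cs \<in> space M \<rightarrow> UNIV" by simp
  fix ys :: "'x list"
  have g: "(\<lambda>w. arg_min_on (cs ! i) (vis A cs i w)) \<in> measurable M (count_space UNIV)" for i
    using measurable_compose[OF vis_meas[where A=A and cs=cs and M=M and i=i, OF m], of "arg_min_on (cs ! i)" "count_space UNIV"]
    by simp
  have "{w\<in>space M. \<forall>i\<in>{..<length cs}. arg_min_on (cs ! i) (vis A cs i w) = ys ! i} \<in> sets M"
    by (rule sets.sets_Collect_countable_All') (auto intro: eq_sets[OF g])
  moreover have "\<And>w. (alg A cs w = ys) = (length ys = length cs \<and> (\<forall>i\<in>{..<length cs}. arg_min_on (cs ! i) (vis A cs i w) = ys ! i))"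
    unfolding alg_def list_eq_iff_nth_eq by auto
  ultimately show "alg A cs -` {ys} \<inter> space M \<in> sets M"
  proof (cases "length ys = length cs")
    case True
    assume S: "{w\<in>space M. \<forall>i\<in>{..<length cs}. arg_min_on (cs ! i) (vis A cs i w) = ys ! i} \<in> sets M"
      and E: "\<And>w. (alg A cs w = ys) = (length ys = length cs \<and> (\<forall>i\<in>{..<length cs}. arg_min_on (cs ! i) (vis A cs i w) = ys ! i))"
    have "alg A cs -` {ys} \<inter> space M = {w\<in>space M. \<forall>i\<in>{..<length cs}. arg_min_on (cs ! i) (vis A cs i w) = ys ! i}"
      using E True by blast
    then show ?thesis using S by simp
  next
    case False
    assume E: "\<And>w. (alg A cs w = ys) = (length ys = length cs \<and> (\<forall>i\<in>{..<length cs}. arg_min_on (cs ! i) (vis A cs i w) = ys ! i))"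
    have "alg A cs -` {ys} \<inter> space M = {}" using E False by blast
    then show ?thesis by simp
  qed
qed

lemma alg_take:
  fixes A :: "'w \<Rightarrow> (real \<Rightarrow> 'x::finite \<Rightarrow> real) \<Rightarrow> real \<Rightarrow> 'x"
  assumes onl: "\<forall>c c' T. cost_path c \<and> cost_path c' \<and> (\<forall>t\<in>{0..T}. c t = c' t) \<longrightarrow> (\<forall>w\<in>space M. A w c T = A w c' T)"
    and nn: "nonneg_costs cs" and w: "w \<in> space M"
  shows "take t (alg A cs w) = alg A (take t cs) w"
proof -
  have nn': "nonneg_costs (take t cs)" using nn by (auto simp: nonneg_costs_def dest: in_set_takeD)
  have key: "A w (ccost (take t cs)) (of_rat q) = A w (ccost cs) (of_rat q)"
    if "real i + 1 \<le> of_rat q" "of_rat q < real i + 2" "i < t" for i q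
  proof -
    have "\<forall>s\<in>{0..of_rat q}. ccost (take t cs) s = ccost cs s"
      using that by (intro ballI ccost_take_eq) auto
    then show ?thesis using onl cost_path_ccost[OF nn] cost_path_ccost[OF nn'] w by blast
  qed
  have visq: "vis A (take t cs) i w = vis A cs i w" if "i < t" for i
    unfolding vis_def by (intro Collect_cong ex_cong1) (use key[OF _ _ that] in auto)
  show ?thesis
  proof (rule nth_equalityI)
    show "length (take t (alg A cs w)) = length (alg A (take t cs) w)" by simp
    fix i assume "i < length (take t (alg A cs w))"
    then have i: "i < t" "i < length cs" by auto
    then show "take t (alg A cs w) ! i = alg A (take t cs) w ! i"
      by (simp add: alg_def visq)
  qed
qed

lemma disc_cost_nonneg:
  assumes "metric_on d" "nonneg_costs cs"
  shows "0 \<le> disc_cost d rho0 cs xs"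
  unfolding disc_cost_def using assms metric_nonneg[OF assms(1)] nth_mem[of _ cs]
  by (intro sum_nonneg add_nonneg_nonneg) (auto simp: nonneg_costs_def)

theorem mainTheorem4:
  fixes d :: "'x::finite \<Rightarrow> 'x \<Rightarrow> real" and \<alpha> :: real
  assumes "metric_on d"
    and "\<alpha> \<ge> 1"
    and "cont_competitive TYPE('w) d \<alpha>"
  shows "disc_competitive d \<alpha>"
  unfolding disc_competitive_def
proof
  fix rho0
  from assms(3) obtain M :: "'w measure" and A \<beta> where ca: "cont_online_alg d rho0 M A"
    and bnd: "\<forall>c. cost_path c \<longrightarrow> (\<integral>\<^sup>+ w. cont_cost d c (A w c) \<partial>M) \<le> ennreal \<alpha> * cont_opt d rho0 c + ennreal \<beta>"
    unfolding cont_competitive_def by blast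
  have M: "prob_space M" using ca by (simp add: cont_online_alg_def)
  have meas: "(\<lambda>w. A w (ccost cs) q) \<in> measurable M (count_space UNIV)" if "nonneg_costs cs" for cs q
    using ca cost_path_ccost[OF that] by (simp add: cont_online_alg_def)
  have spw: "A w (ccost cs) 0 = rho0 \<and> step_path (A w (ccost cs))" if "nonneg_costs cs" "w \<in> space M" for cs w
    using ca cost_path_ccost[OF that(1)] that(2) by (simp add: cont_online_alg_def)
  have onl: "\<forall>c c' T. cost_path c \<and> cost_path c' \<and> (\<forall>t\<in>{0..T}. c t = c' t) \<longrightarrow> (\<forall>w\<in>space M. A w c T = A w c' T)"
    using ca by (simp add: cont_online_alg_def)
  have am: "alg A cs \<in> measurable M (count_space UNIV)" if "nonneg_costs cs" for cs
    by (rule alg_meas) (rule meas[OF that])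
  define P where "P cs = law M (alg A cs)" for cs
  have setP: "set_pmf (P cs) \<subseteq> {xs. length xs = length cs}" if "nonneg_costs cs" for cs
    using law_set[OF M am[OF that]] unfolding P_def by auto
  have onP: "disc_online_alg P"
    unfolding disc_online_alg_def
  proof (intro allI impI conjI)
    fix cs :: "('x \<Rightarrow> real) list" and t assume nn: "nonneg_costs cs"
    show "\<forall>xs\<in>set_pmf (P cs). length xs = length cs" using setP[OF nn] by auto
    have "map_pmf (take t) (P cs) = law M (take t \<circ> alg A cs)"
      unfolding P_def by (rule law_map[OF M am[OF nn]])
    also have "\<dots> = P (take t cs)"
      unfolding P_def by (rule law_cong) (simp add: alg_take[OF onl nn])
    finally show "map_pmf (take t) (P cs) = P (take t cs)" .
  qed
  show "\<exists>P \<beta>. disc_online_alg P \<and> (\<forall>cs. nonneg_costs cs \<longrightarrow>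
           measure_pmf.expectation (P cs) (disc_cost d rho0 cs) \<le> \<alpha> * disc_opt d rho0 cs + \<beta>)"
  proof (intro exI conjI allI impI)
    show "disc_online_alg P" by (fact onP)
    fix cs :: "('x \<Rightarrow> real) list" assume nn: "nonneg_costs cs"
    let ?h = "disc_cost d rho0 cs"
    have fin: "finite (set_pmf (P cs))"
      using setP[OF nn] finite_lists_length_eq[of "UNIV :: 'x set" "length cs"] by (auto intro: finite_subset)
    have opt_nn: "0 \<le> disc_opt d rho0 cs"
      unfolding disc_opt_def
      by (rule cINF_greatest) (auto intro: exI[of _ "replicate (length cs) undefined"] disc_cost_nonneg[OF assms(1) nn])
    have "ennreal (measure_pmf.expectation (P cs) ?h) = (\<integral>\<^sup>+ x. ennreal (?h x) \<partial>measure_pmf (P cs))"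
      by (rule nn_integral_eq_integral[symmetric])
         (auto intro: integrable_measure_pmf_finite[OF fin] disc_cost_nonneg[OF assms(1) nn])
    also have "\<dots> = (\<integral>\<^sup>+ w. ennreal (?h (alg A cs w)) \<partial>M)"
      unfolding P_def by (rule law_nn_integral[OF M am[OF nn]])
    also have "\<dots> \<le> (\<integral>\<^sup>+ w. cont_cost d (ccost cs) (A w (ccost cs)) \<partial>M)"
    proof (rule nn_integral_mono)
      fix w assume w: "w \<in> space M"
      have s1: "step_path (A w (ccost cs))" and s2: "A w (ccost cs) 0 = rho0" using spw[OF nn w] by auto
      show "ennreal (?h (alg A cs w)) \<le> cont_cost d (ccost cs) (A w (ccost cs))"
        by (rule pathwise[where A=A and w=w, OF assms(1) nn s1 s2])
    qed
    also have "\<dots> \<le> ennreal \<alpha> * cont_opt d rho0 (ccost cs) + ennreal \<beta>"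
      using bnd cost_path_ccost[OF nn] by (elim allE impE)
    also have "\<dots> \<le> ennreal \<alpha> * ennreal (disc_opt d rho0 cs) + ennreal (max \<beta> 0)"
      by (intro add_mono mult_left_mono cont_opt_le[OF assms(1) nn] ennreal_leI) auto
    also have "\<dots> = ennreal (\<alpha> * disc_opt d rho0 cs + max \<beta> 0)"
      using assms(2) opt_nn by (simp add: ennreal_mult ennreal_plus)
    finally have "ennreal (measure_pmf.expectation (P cs) ?h) \<le> ennreal (\<alpha> * disc_opt d rho0 cs + max \<beta> 0)" .
    moreover have "0 \<le> \<alpha> * disc_opt d rho0 cs + max \<beta> 0" using assms(2) opt_nn by simp
    ultimately show "measure_pmf.expectation (P cs) ?h \<le> \<alpha> * disc_opt d rho0 cs + max \<beta> 0"
      by (simp add: ennreal_le_iff)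
  qed
qed

end
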